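(* Let $A$ be a complete filtered associative algebra over a field $\mathbb{K}$ of characteristic zero, and let $P:A\to A$ be a linear map preserving the filtration which is moreover an idempotent algebra homomorphism. Let $\chi:A_1\to A_1$ be the BCH-recursion map associated to $P$. Then for every $u\in A_1$, $$\chi(u)=u+\mathrm{BCH}\big(-P(u),u\big).$$
   Context: A complete filtered associative algebra is an associative algebra $A$ with a decreasing filtration $A=A_0\supseteq A_1\supseteq\cdots$ by subalgebras with $A_mA_n\subseteq A_{m+n}$ and $A\cong\varprojlim A/A_n$. $\mathrm{BCH}(x,y)$ is the Baker--Campbell--Hausdorff series defined by $\exp(x)\exp(y)=\exp(x+y+\mathrm{BCH}(x,y))$. With $\tilde P:=\mathrm{id}_A-P$, the BCH-recursion map associated to $P$ is the unique map $\chi:A_1\to A_1$ satisfying $\chi(a)=a-\mathrm{BCH}\big(P(\chi(a)),\tilde P(\chi(a))\big)$ for all $a\in A_1$ (the limit of the iteration $\chi_{(0)}(a)=a$, $\chi_{(n+1)}(a)=a-\mathrm{BCH}(P(\chi_{(n)}(a)),\tilde P(\chi_{(n)}(a)))$ in the filtration topology). *)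

theory Defs
  imports Main
begin

text \<open>A (possibly non-unital) associative algebra over a field 'k of characteristic zero
  is modelled by a type 'a of class ring together with a scalar action sc.\<close>

definition assoc_algebra :: "('k::field_char_0 \<Rightarrow> 'a::ring \<Rightarrow> 'a) \<Rightarrow> bool" where
  "assoc_algebra sc \<longleftrightarrow>
     (\<forall>a x y. sc a (x + y) = sc a x + sc a y) \<and>
     (\<forall>a b x. sc (a + b) x = sc a x + sc b x) \<and>
     (\<forall>a b x. sc (a * b) x = sc a (sc b x)) \<and>
     (\<forall>x. sc 1 x = x) \<and>
     (\<forall>a x y. sc a (x * y) = sc a x * y) \<and>
     (\<forall>a x y. sc a (x * y) = x * sc a y)"

definition filtration :: "('k::field_char_0 \<Rightarrow> 'a::ring \<Rightarrow> 'a) \<Rightarrow> (nat \<Rightarrow> 'a set) \<Rightarrow> bool" where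
  "filtration sc F \<longleftrightarrow>
     F 0 = UNIV \<and>
     (\<forall>n. F (Suc n) \<subseteq> F n) \<and>
     (\<forall>n. 0 \<in> F n \<and> (\<forall>x\<in>F n. \<forall>y\<in>F n. x + y \<in> F n) \<and> (\<forall>a. \<forall>x\<in>F n. sc a x \<in> F n)) \<and>
     (\<forall>m n. \<forall>x\<in>F m. \<forall>y\<in>F n. x * y \<in> F (m + n))"

text \<open>Completeness: the canonical map A -> lim A/A_n is bijective.
  Injectivity: the intersection of the A_n is zero.
  Surjectivity: every compatible family of residues x_n mod A_n comes from an element.\<close>
definition complete_filtration :: "(nat \<Rightarrow> 'a::ring set) \<Rightarrow> bool" where
  "complete_filtration F \<longleftrightarrow>
     (\<Inter>n. F n) = {0} \<and>
     (\<forall>x. (\<forall>n. x (Suc n) - x n \<in> F n) \<longrightarrow> (\<exists>y. \<forall>n. y - x n \<in> F n))"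

definition complete_filtered_algebra ::
  "('k::field_char_0 \<Rightarrow> 'a::ring \<Rightarrow> 'a) \<Rightarrow> (nat \<Rightarrow> 'a set) \<Rightarrow> bool" where
  "complete_filtered_algebra sc F \<longleftrightarrow>
     assoc_algebra sc \<and> filtration sc F \<and> complete_filtration F"

definition filt_lim :: "(nat \<Rightarrow> 'a::ring set) \<Rightarrow> (nat \<Rightarrow> 'a) \<Rightarrow> 'a \<Rightarrow> bool" where
  "filt_lim F s y \<longleftrightarrow> (\<forall>k. \<exists>N. \<forall>n\<ge>N. s n - y \<in> F k)"

definition fsum :: "(nat \<Rightarrow> 'a::ring set) \<Rightarrow> (nat \<Rightarrow> 'a) \<Rightarrow> 'a" where
  "fsum F f = (THE y. filt_lim F (\<lambda>n. \<Sum>i<n. f i) y)"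

fun npow :: "nat \<Rightarrow> 'a::ring \<Rightarrow> 'a" where
  "npow 0 z = 0"
| "npow (Suc 0) z = z"
| "npow (Suc (Suc n)) z = z * npow (Suc n) z"

definition mon :: "nat \<Rightarrow> nat \<Rightarrow> 'a::ring \<Rightarrow> 'a \<Rightarrow> 'a" where
  "mon p q x y = (if p = 0 then npow q y else if q = 0 then npow p x else npow p x * npow q y)"

text \<open>exp(x) exp(y) - 1 = sum over (p,q) /= (0,0) of x^p y^q / (p! q!), grouped by total degree.\<close>
definition exp_prod_m1 ::
  "('k::field_char_0 \<Rightarrow> 'a::ring \<Rightarrow> 'a) \<Rightarrow> (nat \<Rightarrow> 'a set) \<Rightarrow> 'a \<Rightarrow> 'a \<Rightarrow> 'a" where
  "exp_prod_m1 sc F x y = fsum F (\<lambda>n. if n = 0 then 0 else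
      (\<Sum>p\<le>n. sc (1 / (of_nat (fact p) * of_nat (fact (n - p)))) (mon p (n - p) x y)))"

definition log1p ::
  "('k::field_char_0 \<Rightarrow> 'a::ring \<Rightarrow> 'a) \<Rightarrow> (nat \<Rightarrow> 'a set) \<Rightarrow> 'a \<Rightarrow> 'a" where
  "log1p sc F z = fsum F (\<lambda>k. if k = 0 then 0 else sc ((-1) ^ (k + 1) / of_nat k) (npow k z))"

text \<open>BCH(x,y) defined by exp(x) exp(y) = exp(x + y + BCH(x,y)), i.e.
  BCH(x,y) = log(exp(x) exp(y)) - x - y (for x, y in A_1).\<close>
definition BCH ::
  "('k::field_char_0 \<Rightarrow> 'a::ring \<Rightarrow> 'a) \<Rightarrow> (nat \<Rightarrow> 'a set) \<Rightarrow> 'a \<Rightarrow> 'a \<Rightarrow> 'a" where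
  "BCH sc F x y = log1p sc F (exp_prod_m1 sc F x y) - x - y"

end

theory Submission
  imports Defs "HOL-Computational_Algebra.Formal_Power_Series"
begin

locale cfa =
  fixes sc :: "'k::field_char_0 \<Rightarrow> 'a::ring \<Rightarrow> 'a" and F :: "nat \<Rightarrow> 'a set"
  assumes cfa: "complete_filtered_algebra sc F"
begin

lemma alg: "assoc_algebra sc" and filt: "filtration sc F" and compl: "complete_filtration F"
  using cfa by (auto simp: complete_filtered_algebra_def)

lemma sc_add: "sc a (x + y) = sc a x + sc a y" using alg unfolding assoc_algebra_def by blast
lemma sc_add_left: "sc (a + b) x = sc a x + sc b x" using alg unfolding assoc_algebra_def by blast
lemma sc_sc: "sc (a * b) x = sc a (sc b x)" using alg unfolding assoc_algebra_def by blast
lemma sc_one[simp]: "sc 1 x = x" using alg unfolding assoc_algebra_def by blast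
lemma assoc_ml: "\<forall>a x y. sc a (x * y) = sc a x * y" using alg unfolding assoc_algebra_def by (elim conjE) assumption
lemma assoc_mr: "\<forall>a x y. sc a (x * y) = x * sc a y" using alg unfolding assoc_algebra_def by (elim conjE) assumption
lemma sc_mult_left: "sc a (x * y) = sc a x * y" by (rule assoc_ml[rule_format])
lemma sc_mult_right: "sc a (x * y) = x * sc a y" by (rule assoc_mr[rule_format])
lemma sc_zero_left[simp]: "sc 0 x = 0"
  using sc_add_left[of 0 0 x] by simp
lemma sc_zero_right[simp]: "sc a 0 = 0"
  using sc_add[of a 0 0] by simp
lemma sc_neg_left: "sc (-a) x = - sc a x"
  using sc_add_left[of "-a" a x] by (simp add: eq_neg_iff_add_eq_0)
lemma sc_neg: "sc a (-x) = - sc a x"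
  using sc_add[of a "-x" x] by (simp add: eq_neg_iff_add_eq_0)
lemma sc_diff: "sc a (x - y) = sc a x - sc a y"
  using sc_add[of a x "-y"] sc_neg[of a y] by simp
lemma sc_sum: "sc a (sum f A) = (\<Sum>i\<in>A. sc a (f i))"
  by (induct A rule: infinite_finite_induct) (auto simp: sc_add)

lemma filt_u: "filtration sc F" by (rule filt)
lemma f1: "F 0 = UNIV" using filt_u[unfolded filtration_def] by (rule conjunct1)
lemma f2: "\<forall>n. F (Suc n) \<subseteq> F n" using filt_u[unfolded filtration_def] by (elim conjE)
lemma f3: "\<forall>n. 0 \<in> F n \<and> (\<forall>x\<in>F n. \<forall>y\<in>F n. x + y \<in> F n) \<and> (\<forall>a. \<forall>x\<in>F n. sc a x \<in> F n)"
  using filt_u[unfolded filtration_def] by (elim conjE)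
lemma f4: "\<forall>m n. \<forall>x\<in>F m. \<forall>y\<in>F n. x * y \<in> F (m + n)"
  using filt_u[unfolded filtration_def] by (elim conjE)
lemma F0[simp]: "x \<in> F 0" using f1 by simp
lemma F_Suc: "F (Suc n) \<subseteq> F n" using f2 by blast
lemma F_mono: "m \<le> n \<Longrightarrow> F n \<subseteq> F m"
  by (rule lift_Suc_antimono_le[of F]) (rule F_Suc)
lemma F_monoD: "x \<in> F n \<Longrightarrow> m \<le> n \<Longrightarrow> x \<in> F m"
  using F_mono by blast
lemma F_zero[simp]: "0 \<in> F n" using f3 by blast
lemma F_add: "x \<in> F n \<Longrightarrow> y \<in> F n \<Longrightarrow> x + y \<in> F n" using f3 by blast
lemma F_sc: "x \<in> F n \<Longrightarrow> sc a x \<in> F n" using f3 by blast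
lemma F_mult: "x \<in> F m \<Longrightarrow> y \<in> F n \<Longrightarrow> x * y \<in> F (m + n)" using f4 by blast
lemma F_neg: "x \<in> F n \<Longrightarrow> - x \<in> F n"
  using F_sc[of x n "-1"] by (simp add: sc_neg_left)
lemma F_diff: "x \<in> F n \<Longrightarrow> y \<in> F n \<Longrightarrow> x - y \<in> F n"
  using F_add[OF _ F_neg[of y]] by (metis diff_conv_add_uminus)
lemma F_sum: "(\<And>i. i \<in> A \<Longrightarrow> f i \<in> F n) \<Longrightarrow> sum f A \<in> F n"
  by (induct A rule: infinite_finite_induct) (auto intro: F_add)
lemma F_mult_left: "x \<in> F n \<Longrightarrow> x * y \<in> F n"
  using F_mult[of x n y 0] by simp
lemma F_mult_right: "y \<in> F n \<Longrightarrow> x * y \<in> F n"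
  using F_mult[of x 0 y n] by simp
lemma F_inter: assumes "\<And>n. x \<in> F n" shows "x = 0"
proof -
  have "(\<Inter>n. F n) = {0}" using compl by (simp add: complete_filtration_def)
  moreover have "x \<in> (\<Inter>n. F n)" using assms by simp
  ultimately show ?thesis by simp
qed
lemma F_complete: assumes "\<And>n. x (Suc n) - x n \<in> F n" shows "\<exists>y. \<forall>n. y - x n \<in> F n"
proof -
  have "\<forall>x. (\<forall>n. x (Suc n) - x n \<in> F n) \<longrightarrow> (\<exists>y. \<forall>n. y - x n \<in> F n)"
    using compl by (simp add: complete_filtration_def)
  then show ?thesis using assms by blast
qed

lemma psum_diff: fixes f :: "nat \<Rightarrow> 'a" shows "(m::nat) \<le> n \<Longrightarrow> (\<Sum>i<n. f i) - (\<Sum>i<m. f i) = (\<Sum>i\<in>{m..<n}. f i)"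
proof -
  assume "m \<le> n"
  then have e: "{..<n} = {..<m} \<union> {m..<n}" by auto
  have "(\<Sum>i<n. f i) = sum f ({..<m} \<union> {m..<n})" by (subst e) simp
  also have "\<dots> = (\<Sum>i<m. f i) + (\<Sum>i\<in>{m..<n}. f i)"
    by (rule sum.union_disjoint) auto
  finally have "(\<Sum>i<n. f i) = (\<Sum>i<m. f i) + (\<Sum>i\<in>{m..<n}. f i)" .
  then show ?thesis by simp
qed

lemma lim_unique: assumes "filt_lim F s y" "filt_lim F s z" shows "y = z"
proof -
  have "y - z \<in> F k" for k
  proof -
    obtain N1 where N1: "\<forall>n\<ge>N1. s n - y \<in> F k" using assms(1) unfolding filt_lim_def by blast
    obtain N2 where N2: "\<forall>n\<ge>N2. s n - z \<in> F k" using assms(2) unfolding filt_lim_def by blast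
    have "(s (max N1 N2) - z) - (s (max N1 N2) - y) \<in> F k"
      by (rule F_diff) (use N1 N2 in auto)
    then show ?thesis by simp
  qed
  then show ?thesis using F_inter[of "y - z"] by simp
qed

lemma fsum_eqI: "filt_lim F (\<lambda>n. \<Sum>i<n. f i) y \<Longrightarrow> fsum F f = y"
  unfolding fsum_def using lim_unique by blast

definition null :: "(nat \<Rightarrow> 'a) \<Rightarrow> bool" where
  "null f \<longleftrightarrow> (\<forall>k. \<exists>N. \<forall>n\<ge>N. f n \<in> F k)"

lemma null_F: "(\<And>n. f n \<in> F n) \<Longrightarrow> null f"
  unfolding null_def using F_monoD by blast

lemma null_conv: assumes "null f" shows "\<exists>y. filt_lim F (\<lambda>n. \<Sum>i<n. f i) y"
proof -
  from assms have "\<forall>k. \<exists>N. \<forall>n\<ge>N. f n \<in> F k" unfolding null_def .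
  from choice[OF this] obtain M where M0: "\<forall>k. \<forall>n\<ge>M k. f n \<in> F k" by blast
  then have M: "\<And>k n. n \<ge> M k \<Longrightarrow> f n \<in> F k" by blast
  define N where "N k = (\<Sum>j\<le>k. M j)" for k
  have MN: "M k \<le> N k" for k unfolding N_def by (rule member_le_sum) auto
  have Nmono: "N k \<le> N (Suc k)" for k unfolding N_def by simp
  define x where "x k = (\<Sum>i<N k. f i)" for k
  have "x (Suc k) - x k \<in> F k" for k
    unfolding x_def psum_diff[OF Nmono]
    by (rule F_sum) (use M MN in \<open>auto intro: order_trans\<close>)
  then obtain y where y: "\<And>k. y - x k \<in> F k" using F_complete by blast
  have "filt_lim F (\<lambda>n. \<Sum>i<n. f i) y"
    unfolding filt_lim_def
  proof
    fix k show "\<exists>Na. \<forall>n\<ge>Na. (\<Sum>i<n. f i) - y \<in> F k"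
    proof (intro exI allI impI)
      fix n assume n: "n \<ge> N k"
      have "(\<Sum>i<n. f i) - y = ((\<Sum>i<n. f i) - x k) + - (y - x k)" by simp
      also have "\<dots> \<in> F k"
        unfolding x_def psum_diff[OF n]
        by (intro F_add F_neg F_sum y[unfolded x_def]) (use M MN n in \<open>auto intro: order_trans\<close>)
      finally show "(\<Sum>i<n. f i) - y \<in> F k" .
    qed
  qed
  then show ?thesis by blast
qed

lemma fsum_lim: "null f \<Longrightarrow> filt_lim F (\<lambda>n. \<Sum>i<n. f i) (fsum F f)"
  using null_conv fsum_eqI by metis

lemma lim_add: "filt_lim F s y \<Longrightarrow> filt_lim F t z \<Longrightarrow> filt_lim F (\<lambda>n. s n + t n) (y + z)"
  unfolding filt_lim_def
proof
  fix k assume a: "\<forall>k. \<exists>N. \<forall>n\<ge>N. s n - y \<in> F k" and b: "\<forall>k. \<exists>N. \<forall>n\<ge>N. t n - z \<in> F k"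
  obtain N1 where N1: "\<forall>n\<ge>N1. s n - y \<in> F k" using a by blast
  obtain N2 where N2: "\<forall>n\<ge>N2. t n - z \<in> F k" using b by blast
  have "s n + t n - (y + z) \<in> F k" if "n \<ge> max N1 N2" for n
  proof -
    have e: "s n + t n - (y + z) = (s n - y) + (t n - z)" by simp
    show ?thesis unfolding e by (rule F_add) (use N1 N2 that in auto)
  qed
  then show "\<exists>N. \<forall>n\<ge>N. s n + t n - (y + z) \<in> F k" by blast
qed

lemma null_add: "null f \<Longrightarrow> null g \<Longrightarrow> null (\<lambda>n. f n + g n)"
  unfolding null_def
proof
  fix k assume a: "\<forall>k. \<exists>N. \<forall>n\<ge>N. f n \<in> F k" and b: "\<forall>k. \<exists>N. \<forall>n\<ge>N. g n \<in> F k"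
  obtain N1 where N1: "\<forall>n\<ge>N1. f n \<in> F k" using a by blast
  obtain N2 where N2: "\<forall>n\<ge>N2. g n \<in> F k" using b by blast
  show "\<exists>N. \<forall>n\<ge>N. f n + g n \<in> F k"
    by (rule exI[of _ "max N1 N2"]) (use N1 N2 in \<open>auto intro!: F_add\<close>)
qed

lemma fsum_add: "null f \<Longrightarrow> null g \<Longrightarrow> fsum F (\<lambda>n. f n + g n) = fsum F f + fsum F g"
  by (rule fsum_eqI) (simp add: sum.distrib lim_add fsum_lim)

definition addhom :: "('a \<Rightarrow> 'a) \<Rightarrow> bool" where
  "addhom h \<longleftrightarrow> (\<forall>x y. h (x + y) = h x + h y) \<and> (\<forall>n. \<forall>x\<in>F n. h x \<in> F n)"

lemma addhom_0: assumes "addhom h" shows "h 0 = 0"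
proof -
  have "h (0 + 0) = h 0 + h 0" using assms unfolding addhom_def by blast
  then show ?thesis by simp
qed
lemma addhom_diff: assumes "addhom h" shows "h (x - y) = h x - h y"
proof -
  have "h ((x - y) + y) = h (x - y) + h y" using assms unfolding addhom_def by blast
  then show ?thesis by (simp add: eq_diff_eq)
qed
lemma addhom_sum: "addhom h \<Longrightarrow> h (sum f A) = (\<Sum>i\<in>A. h (f i))"
  by (induct A rule: infinite_finite_induct) (auto simp: addhom_0 addhom_def)
lemma addhom_F: "addhom h \<Longrightarrow> x \<in> F n \<Longrightarrow> h x \<in> F n"
  unfolding addhom_def by blast

lemma lim_hom: assumes h: "addhom h" and l: "filt_lim F s y" shows "filt_lim F (\<lambda>n. h (s n)) (h y)"
  unfolding filt_lim_def
proof
  fix k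
  obtain N where N: "\<forall>n\<ge>N. s n - y \<in> F k" using l unfolding filt_lim_def by blast
  have "h (s n) - h y \<in> F k" if "n \<ge> N" for n
    using addhom_F[OF h, of "s n - y" k] N that by (simp add: addhom_diff[OF h])
  then show "\<exists>N. \<forall>n\<ge>N. h (s n) - h y \<in> F k" by blast
qed

lemma null_hom: assumes h: "addhom h" and f: "null f" shows "null (\<lambda>n. h (f n))"
  unfolding null_def
proof
  fix k
  obtain N where N: "\<forall>n\<ge>N. f n \<in> F k" using f unfolding null_def by blast
  then show "\<exists>N. \<forall>n\<ge>N. h (f n) \<in> F k" using addhom_F[OF h] by blast
qed

lemma fsum_hom: "addhom h \<Longrightarrow> null f \<Longrightarrow> fsum F (\<lambda>n. h (f n)) = h (fsum F f)"
proof (rule fsum_eqI)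
  assume h: "addhom h" and f: "null f"
  have "(\<lambda>n. \<Sum>i<n. h (f i)) = (\<lambda>n. h (\<Sum>i<n. f i))" by (simp only: addhom_sum[OF h])
  then show "filt_lim F (\<lambda>n. \<Sum>i<n. h (f i)) (h (fsum F f))"
    using lim_hom[OF h fsum_lim[OF f]] by simp
qed

lemma addhom_sc: "addhom (sc a)"
  unfolding addhom_def by (simp add: sc_add F_sc)
lemma addhom_multl: "addhom (\<lambda>x. c * x)"
  unfolding addhom_def by (simp add: distrib_left F_mult_right)
lemma addhom_multr: "addhom (\<lambda>x. x * c)"
  unfolding addhom_def by (simp add: distrib_right F_mult_left)
lemma addhom_neg: "addhom uminus"
  unfolding addhom_def by (simp add: F_neg)

lemma fsum_F: assumes "null f" "\<And>n. f n \<in> F k" shows "fsum F f \<in> F k"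
proof -
  obtain N where N: "\<forall>n\<ge>N. (\<Sum>i<n. f i) - fsum F f \<in> F k"
    using fsum_lim[OF assms(1)] unfolding filt_lim_def by blast
  have A: "(\<Sum>i<N. f i) \<in> F k" by (rule F_sum) (use assms in auto)
  have B: "(\<Sum>i<N. f i) - fsum F f \<in> F k" using N by simp
  have "(\<Sum>i<N. f i) - ((\<Sum>i<N. f i) - fsum F f) \<in> F k" by (rule F_diff[OF A B])
  then show ?thesis by simp
qed

lemma fsum_finite: assumes "\<And>n. n \<ge> N \<Longrightarrow> f n = 0" shows "fsum F f = (\<Sum>i<N. f i)"
proof (rule fsum_eqI)
  have eq: "(\<Sum>i<n. f i) - (\<Sum>i<N. f i) = 0" if "n \<ge> N" for n
  proof -
    have "sum f {N..<n} = 0" by (intro sum.neutral ballI assms) simp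
    then show ?thesis by (simp only: psum_diff[OF that])
  qed
  show "filt_lim F (\<lambda>n. \<Sum>i<n. f i) (\<Sum>i<N. f i)"
    unfolding filt_lim_def
  proof
    fix k
    have "\<forall>n\<ge>N. (\<Sum>i<n. f i) - (\<Sum>i<N. f i) \<in> F k"
    proof (intro allI impI)
      fix n assume h: "N \<le> n"
      show "(\<Sum>i<n. f i) - (\<Sum>i<N. f i) \<in> F k" unfolding eq[OF h] by (rule F_zero)
    qed
    then show "\<exists>M. \<forall>n\<ge>M. (\<Sum>i<n. f i) - (\<Sum>i<N. f i) \<in> F k" by (rule exI[of _ N])
  qed
qed

lemma cauchy: assumes a: "\<And>i. a i \<in> F i" and b: "\<And>i. b i \<in> F i"
  shows "fsum F a * fsum F b = fsum F (\<lambda>n. \<Sum>p\<le>n. a p * b (n - p))"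
proof (rule sym, rule fsum_eqI)
  let ?A = "fsum F a" and ?B = "fsum F b"
  have key: "(\<Sum>i<n. a i) * (\<Sum>i<n. b i) - (\<Sum>m<n. \<Sum>p\<le>m. a p * b (m - p)) \<in> F n" for n
  proof -
    let ?g = "\<lambda>(i,j). a i * b j"
    let ?S = "{..<n} \<times> {..<n}" and ?T = "{(i,j). i + j < n}"
    have "(\<Sum>i<n. a i) * (\<Sum>i<n. b i) = sum ?g ?S"
      by (simp add: sum_product sum.cartesian_product)
    also have "\<dots> = sum ?g (?S - ?T) + sum ?g ?T"
      by (rule sum.subset_diff) auto
    also have "sum ?g ?T = (\<Sum>m<n. \<Sum>p\<le>m. a p * b (m - p))"
      by (rule sum.triangle_reindex)
    finally have eq: "(\<Sum>i<n. a i) * (\<Sum>i<n. b i) - (\<Sum>m<n. \<Sum>p\<le>m. a p * b (m - p)) = sum ?g (?S - ?T)"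
      by simp
    have "sum ?g (?S - ?T) \<in> F n"
    proof (rule F_sum)
      fix ij assume "ij \<in> ?S - ?T"
      then obtain i j where ij: "ij = (i,j)" "i + j \<ge> n" by auto
      then show "?g ij \<in> F n" using F_monoD[OF F_mult[OF a b]] by auto
    qed
    then show ?thesis using eq by simp
  qed
  show "filt_lim F (\<lambda>n. \<Sum>m<n. \<Sum>p\<le>m. a p * b (m - p)) (?A * ?B)"
    unfolding filt_lim_def
  proof
    fix k
    obtain N1 where N1: "\<forall>n\<ge>N1. (\<Sum>i<n. a i) - ?A \<in> F k"
      using fsum_lim[OF null_F[OF a]] unfolding filt_lim_def by blast
    obtain N2 where N2: "\<forall>n\<ge>N2. (\<Sum>i<n. b i) - ?B \<in> F k"
      using fsum_lim[OF null_F[OF b]] unfolding filt_lim_def by blast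
    have "(\<Sum>m<n. \<Sum>p\<le>m. a p * b (m - p)) - ?A * ?B \<in> F k" if n: "n \<ge> max k (max N1 N2)" for n
    proof -
      let ?An = "\<Sum>i<n. a i" and ?Bn = "\<Sum>i<n. b i" and ?Cn = "\<Sum>m<n. \<Sum>p\<le>m. a p * b (m - p)"
      have "?Cn - ?A * ?B = - (?An * ?Bn - ?Cn) + (?An - ?A) * ?Bn + ?A * (?Bn - ?B)"
        by (simp add: algebra_simps)
      also have "\<dots> \<in> F k"
        using n N1 N2 F_monoD[OF key[of n], of k]
        by (intro F_add F_neg F_mult_left F_mult_right) auto
      finally show ?thesis .
    qed
    then show "\<exists>N. \<forall>n\<ge>N. (\<Sum>m<n. \<Sum>p\<le>m. a p * b (m - p)) - ?A * ?B \<in> F k" by blast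
  qed
qed

end

lemma npow_Suc: "n \<ge> 1 \<Longrightarrow> npow (Suc n) x = x * npow n x"
  by (cases n) auto

lemma npow_add: "m \<ge> 1 \<Longrightarrow> n \<ge> 1 \<Longrightarrow> npow (m + n) x = npow m x * npow n x"
proof (induction m rule: nat_induct_at_least)
  case base
  then show ?case using npow_Suc[of n x] by simp
next
  case (Suc m)
  have "npow (Suc m + n) x = x * npow (m + n) x" using npow_Suc[of "m + n" x] Suc by simp
  also have "\<dots> = x * (npow m x * npow n x)" using Suc by simp
  also have "\<dots> = npow (Suc m) x * npow n x" using npow_Suc[of m x] Suc by (simp add: mult.assoc)
  finally show ?case .
qed

lemma npow_zero_base[simp]: "npow n (0::'a::ring) = 0"
proof (induction n)
  case (Suc n) then show ?case by (cases n) auto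
qed simp

lemma npow_hom:
  assumes "\<And>x y. h (x * y) = h x * h y" "h 0 = 0"
  shows "h (npow n x) = npow n (h x)"
  by (induction n x rule: npow.induct) (auto simp: assms)

context cfa
begin

lemma npow_F: "x \<in> F 1 \<Longrightarrow> npow n x \<in> F n"
proof (induction n x rule: npow.induct)
  case (3 n z)
  then have "npow (Suc n) z \<in> F (Suc n)" by simp
  from F_mult[OF 3(2) this] show ?case by simp
qed auto

lemma sc_sum_left: "sc (sum c A) y = (\<Sum>i\<in>A. sc (c i) y)"
  by (induct A rule: infinite_finite_induct) (auto simp: sc_add_left)

definition ev :: "'a \<Rightarrow> 'k fps \<Rightarrow> 'a" where
  "ev x f = fsum F (\<lambda>n. sc (fps_nth f n) (npow n x))"

lemma ev_term_F: "x \<in> F 1 \<Longrightarrow> sc (fps_nth f n) (npow n x) \<in> F n"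
  by (rule F_sc, rule npow_F)

lemma ev_null: "x \<in> F 1 \<Longrightarrow> null (\<lambda>n. sc (fps_nth f n) (npow n x))"
  by (rule null_F, rule ev_term_F)

lemma ev_add: assumes x: "x \<in> F 1" shows "ev x (f + g) = ev x f + ev x g"
proof -
  have "ev x (f + g) = fsum F (\<lambda>n. sc (fps_nth f n) (npow n x) + sc (fps_nth g n) (npow n x))"
    unfolding ev_def by (simp add: sc_add_left)
  also have "\<dots> = ev x f + ev x g"
    unfolding ev_def by (rule fsum_add; rule ev_null[OF x])
  finally show ?thesis .
qed

lemma ev_cmult: assumes x: "x \<in> F 1" shows "ev x (fps_const c * f) = sc c (ev x f)"
proof -
  have "ev x (fps_const c * f) = fsum F (\<lambda>n. sc c (sc (fps_nth f n) (npow n x)))"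
    unfolding ev_def by (simp add: sc_sc)
  also have "\<dots> = sc c (ev x f)"
    unfolding ev_def by (rule fsum_hom[OF addhom_sc ev_null[OF x]])
  finally show ?thesis .
qed

lemma ev_neg: assumes x: "x \<in> F 1" shows "ev x (- f) = - ev x f"
proof -
  have "ev x (- f) = fsum F (\<lambda>n. - (sc (fps_nth f n) (npow n x)))"
    unfolding ev_def by (simp add: sc_neg_left)
  also have "\<dots> = - ev x f"
    unfolding ev_def by (rule fsum_hom[OF addhom_neg ev_null[OF x]])
  finally show ?thesis .
qed

lemma ev_diff: assumes x: "x \<in> F 1" shows "ev x (f - g) = ev x f - ev x g"
  using ev_add[OF x, of f "-g"] ev_neg[OF x, of g] by simp

lemma ev_F: assumes x: "x \<in> F 1" and f: "\<And>i. i < k \<Longrightarrow> fps_nth f i = 0" shows "ev x f \<in> F k"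
  unfolding ev_def
proof (rule fsum_F[OF ev_null[OF x]])
  fix n show "sc (fps_nth f n) (npow n x) \<in> F k"
  proof (cases "n < k")
    case True then show ?thesis using f by simp
  next
    case False then show ?thesis using F_monoD[OF ev_term_F[OF x, of f n], of k] by simp
  qed
qed

lemma ev_zero[simp]: "ev x 0 = 0"
  unfolding ev_def using fsum_finite[of 0 "\<lambda>n. sc (fps_nth (0::'k fps) n) (npow n x)"] by simp

lemma ev_one[simp]: "ev x 1 = 0"
proof -
  have "ev x 1 = (\<Sum>i<0. sc (fps_nth (1::'k fps) i) (npow i x))"
    unfolding ev_def by (rule fsum_finite) (auto simp: fps_one_nth)
  then show ?thesis by simp
qed

lemma ev_X[simp]: "ev x fps_X = x"
proof -
  have "ev x fps_X = (\<Sum>i<2. sc (fps_nth (fps_X::'k fps) i) (npow i x))"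
    unfolding ev_def by (rule fsum_finite) (auto simp: fps_X_nth)
  also have "\<dots> = x" by (simp add: numeral_2_eq_2 fps_X_nth)
  finally show ?thesis .
qed

lemma ev_sum: assumes x: "x \<in> F 1" shows "ev x (\<Sum>i\<in>A. h i) = (\<Sum>i\<in>A. ev x (h i))"
  by (induct A rule: infinite_finite_induct) (auto simp: ev_add[OF x])

end

context cfa
begin

lemma sc_prod: "sc a u * sc b v = sc (a * b) (u * v)"
proof -
  have "sc a u * sc b v = sc a (u * sc b v)" by (rule sc_mult_left[symmetric])
  also have "\<dots> = sc a (sc b (u * v))" by (simp only: sc_mult_right)
  also have "\<dots> = sc (a * b) (u * v)" by (simp only: sc_sc)
  finally show ?thesis .
qed

lemma ev_mult: assumes x: "x \<in> F 1" and f0: "fps_nth f 0 = 0" and g0: "fps_nth g 0 = 0"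
  shows "ev x (f * g) = ev x f * ev x g"
proof -
  have "ev x f * ev x g = fsum F (\<lambda>n. \<Sum>p\<le>n. sc (fps_nth f p) (npow p x) * sc (fps_nth g (n-p)) (npow (n-p) x))"
    unfolding ev_def by (rule cauchy; rule ev_term_F[OF x])
  also have "\<dots> = ev x (f * g)" unfolding ev_def
  proof (rule arg_cong[where f="fsum F"], rule ext)
    fix n
    have "sc (fps_nth (f * g) n) (npow n x) = (\<Sum>p\<le>n. sc (fps_nth f p * fps_nth g (n-p)) (npow n x))"
      by (simp add: fps_mult_nth atLeast0AtMost sc_sum_left)
    also have "\<dots> = (\<Sum>p\<le>n. sc (fps_nth f p) (npow p x) * sc (fps_nth g (n-p)) (npow (n-p) x))"
    proof (rule sum.cong[OF refl])
      fix p assume p: "p \<in> {..n}"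
      show "sc (fps_nth f p * fps_nth g (n-p)) (npow n x) = sc (fps_nth f p) (npow p x) * sc (fps_nth g (n-p)) (npow (n-p) x)"
      proof (cases "p = 0 \<or> p = n")
        case True then show ?thesis using f0 g0 by auto
      next
        case False
        then have "p \<ge> 1" "n - p \<ge> 1" "n = p + (n - p)" using p by auto
        then have "npow n x = npow p x * npow (n - p) x" using npow_add[of p "n - p" x] by simp
        then show ?thesis by (simp only: sc_prod)
      qed
    qed
    finally show "(\<Sum>p\<le>n. sc (fps_nth f p) (npow p x) * sc (fps_nth g (n-p)) (npow (n-p) x)) = sc (fps_nth (f * g) n) (npow n x)"
      by (rule sym)
  qed
  finally show ?thesis by (rule sym)
qed

lemma ev_power: assumes x: "x \<in> F 1" and g0: "fps_nth g 0 = 0"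
  shows "ev x (g ^ n) = npow n (ev x g)"
proof (induction n)
  case 0 then show ?case by simp
next
  case (Suc n)
  show ?case
  proof (cases n)
    case 0 then show ?thesis by simp
  next
    case (Suc m)
    have p0: "fps_nth (g ^ n) 0 = 0" using g0 Suc by (simp add: fps_power_zeroth)
    have "ev x (g ^ Suc n) = ev x (g * g ^ n)" by simp
    also have "\<dots> = ev x g * ev x (g ^ n)" by (rule ev_mult[OF x g0 p0])
    also have "\<dots> = ev x g * npow n (ev x g)" using Suc.IH by simp
    also have "\<dots> = npow (Suc n) (ev x g)" using npow_Suc[of n "ev x g"] Suc by simp
    finally show ?thesis .
  qed
qed

lemma ev_F1: assumes x: "x \<in> F 1" and g0: "fps_nth g 0 = 0" shows "ev x g \<in> F 1"
  by (rule ev_F[OF x]) (use g0 in auto)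

lemma ev_compose: assumes x: "x \<in> F 1" and g0: "fps_nth g 0 = 0"
  shows "ev x (fps_compose f g) = ev (ev x g) f"
proof -
  let ?y = "ev x g"
  define h where "h N = (\<Sum>i<N. fps_const (fps_nth f i) * g ^ i)" for N
  have S: "(\<Sum>i<N. sc (fps_nth f i) (npow i ?y)) = ev x (h N)" for N
    unfolding h_def by (simp add: ev_sum[OF x] ev_cmult[OF x] ev_power[OF x g0])
  have coeff: "fps_nth (h N) j = fps_nth (fps_compose f g) j" if "j < N" for N j
  proof -
    have "fps_nth (h N) j = (\<Sum>i<N. fps_nth f i * fps_nth (g ^ i) j)"
      unfolding h_def by (simp add: fps_sum_nth)
    also have "\<dots> = (\<Sum>i\<in>{0..j}. fps_nth f i * fps_nth (g ^ i) j)"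
    proof (rule sum.mono_neutral_right)
      show "{0..j} \<subseteq> {..<N}" using that by auto
      show "\<forall>i\<in>{..<N} - {0..j}. fps_nth f i * fps_nth (g ^ i) j = 0"
        using startsby_zero_power_prefix[OF g0] by auto
    qed auto
    also have "\<dots> = fps_nth (fps_compose f g) j" by (simp add: fps_compose_nth)
    finally show ?thesis .
  qed
  have "filt_lim F (\<lambda>N. \<Sum>i<N. sc (fps_nth f i) (npow i ?y)) (ev x (fps_compose f g))"
    unfolding filt_lim_def
  proof
    fix k
    have "\<forall>N\<ge>k. (\<Sum>i<N. sc (fps_nth f i) (npow i ?y)) - ev x (fps_compose f g) \<in> F k"
    proof (intro allI impI)
      fix N assume kN: "k \<le> N"
      have "(\<Sum>i<N. sc (fps_nth f i) (npow i ?y)) - ev x (fps_compose f g) = ev x (h N - fps_compose f g)"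
        by (simp only: S ev_diff[OF x])
      also have "\<dots> \<in> F N" by (rule ev_F[OF x]) (simp add: coeff)
      finally show "(\<Sum>i<N. sc (fps_nth f i) (npow i ?y)) - ev x (fps_compose f g) \<in> F k"
        using F_monoD kN by blast
    qed
    then show "\<exists>M. \<forall>n\<ge>M. (\<Sum>i<n. sc (fps_nth f i) (npow i ?y)) - ev x (fps_compose f g) \<in> F k"
      by (rule exI[of _ k])
  qed
  then have "fsum F (\<lambda>i. sc (fps_nth f i) (npow i ?y)) = ev x (fps_compose f g)" by (rule fsum_eqI)
  moreover have "ev ?y f = fsum F (\<lambda>i. sc (fps_nth f i) (npow i ?y))" by (simp only: ev_def)
  ultimately show ?thesis by simp
qed

end

definition Efps :: "'k::field_char_0 fps" where "Efps = fps_exp 1 - 1"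
definition Lfps :: "'k::field_char_0 fps" where "Lfps = fps_ln 1"

lemma Efps0: "fps_nth Efps 0 = 0" by (simp add: Efps_def)
lemma Lfps0: "fps_nth Lfps 0 = 0" by (simp add: Lfps_def)
lemma Efps_nth: "fps_nth (Efps::'k::field_char_0 fps) p = (if p = 0 then 0 else 1 / of_nat (fact p))"
  by (simp add: Efps_def)

lemma LE_fps: "fps_compose (Lfps::'k::field_char_0 fps) Efps = fps_X"
  unfolding Lfps_def Efps_def using fps_ln_fps_exp_inv[of "1::'k"] fps_inv_fps_exp_compose(1)[of "1::'k"] by simp

lemma EL_fps: "fps_compose (Efps::'k::field_char_0 fps) Lfps = fps_X"
  unfolding Lfps_def Efps_def using fps_ln_fps_exp_inv[of "1::'k"] fps_inv_fps_exp_compose(2)[of "1::'k"] by simp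

lemma Eneg_fps: "fps_compose (Efps::'k::field_char_0 fps) (- fps_X) = fps_exp (-1) - 1"
  unfolding Efps_def by (simp add: fps_compose_sub_distrib)

lemma Esum_fps: "((fps_exp (-1) - 1) + Efps + (fps_exp (-1) - 1) * Efps :: 'k::field_char_0 fps) = 0"
proof -
  have "((fps_exp (-1) - 1) + Efps + (fps_exp (-1) - 1) * Efps :: 'k fps) = fps_exp (-1) * fps_exp 1 - 1"
    unfolding Efps_def by (simp add: algebra_simps)
  also have "\<dots> = fps_exp (-1 + 1) - 1" by (simp only: fps_exp_add_mult)
  also have "\<dots> = 0" by simp
  finally show ?thesis .
qed

lemma sum_split_ends: assumes "(n::nat) \<ge> 1"
  shows "(\<Sum>p\<le>n. g p) = g 0 + g n + (\<Sum>p\<in>{1..<n}. g p)"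
proof -
  have e: "{..n} = insert 0 (insert n {1..<n})" using assms by auto
  have "(\<Sum>p\<le>n. g p) = sum g (insert 0 (insert n {1..<n}))" by (simp only: e)
  also have "\<dots> = g 0 + sum g (insert n {1..<n})" by (rule sum.insert) (use assms in auto)
  also have "sum g (insert n {1..<n}) = g n + sum g {1..<n}" by (rule sum.insert) auto
  finally show ?thesis by (simp add: add.assoc)
qed

context cfa
begin

lemma log1p_ev: "log1p sc F z = ev z Lfps"
  unfolding log1p_def ev_def
proof (rule arg_cong[where f="fsum F"], rule ext)
  fix k
  show "(if k = 0 then 0 else sc ((-1) ^ (k + 1) / of_nat k) (npow k z)) = sc (fps_nth Lfps k) (npow k z)"
  proof (cases k)
    case 0 then show ?thesis by (simp add: Lfps0)
  next
    case (Suc m) then show ?thesis by (simp add: Lfps_def fps_ln_nth)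
  qed
qed

lemma LE: "x \<in> F 1 \<Longrightarrow> ev (ev x Efps) Lfps = x"
  using ev_compose[of x Efps Lfps] by (simp add: Efps0 LE_fps)

lemma EL: "z \<in> F 1 \<Longrightarrow> ev (ev z Lfps) Efps = z"
  using ev_compose[of z Lfps Efps] by (simp add: Lfps0 EL_fps)

lemma E_F1: "x \<in> F 1 \<Longrightarrow> ev x Efps \<in> F 1"
  by (rule ev_F1[OF _ Efps0])

lemma Eneg: assumes w: "w \<in> F 1" shows "ev (- w) Efps = ev w (fps_exp (-1) - 1)"
proof -
  have "ev w (fps_compose Efps (- fps_X)) = ev (ev w (- fps_X)) Efps"
    by (rule ev_compose[OF w]) simp
  also have "ev w (- fps_X) = - w" by (simp add: ev_neg[OF w])
  finally show ?thesis by (simp add: Eneg_fps)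
qed

lemma Eid: assumes w: "w \<in> F 1"
  shows "ev (- w) Efps + ev w Efps + ev (- w) Efps * ev w Efps = 0"
proof -
  have z: "fps_nth (fps_exp (-1) - 1 :: 'k fps) 0 = 0" by simp
  have "ev (- w) Efps + ev w Efps + ev (- w) Efps * ev w Efps
      = ev w ((fps_exp (-1) - 1) + Efps + (fps_exp (-1) - 1) * Efps)"
    by (simp only: Eneg[OF w] ev_add[OF w] ev_mult[OF w z Efps0])
  also have "\<dots> = 0" by (simp only: Esum_fps ev_zero)
  finally show ?thesis .
qed

lemma ev_zero_base: "ev 0 f = 0"
proof -
  have "ev 0 f = (\<Sum>i<0. sc (fps_nth f i) (npow i (0::'a)))"
    unfolding ev_def by (rule fsum_finite) simp
  then show ?thesis by simp
qed

lemma exp_prod: assumes x: "x \<in> F 1" and y: "y \<in> F 1"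
  shows "exp_prod_m1 sc F x y = ev x Efps + ev y Efps + ev x Efps * ev y Efps"
proof -
  define a where "a p = sc (fps_nth Efps p) (npow p x)" for p
  define b where "b p = sc (fps_nth Efps p) (npow p y)" for p
  have aF: "a p \<in> F p" for p unfolding a_def by (rule ev_term_F[OF x])
  have bF: "b p \<in> F p" for p unfolding b_def by (rule ev_term_F[OF y])
  have cF: "(\<Sum>p\<le>n. a p * b (n - p)) \<in> F n" for n
  proof (rule F_sum)
    fix p assume "p \<in> {..n}"
    then have "p + (n - p) = n" by auto
    then show "a p * b (n - p) \<in> F n" using F_mult[OF aF bF, of p "n - p"] by simp
  qed
  have "ev x Efps + ev y Efps + ev x Efps * ev y Efps
      = fsum F a + fsum F b + fsum F (\<lambda>n. \<Sum>p\<le>n. a p * b (n - p))"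
    unfolding ev_def a_def b_def by (simp only: cauchy[OF ev_term_F[OF x] ev_term_F[OF y]])
  also have "\<dots> = fsum F (\<lambda>n. a n + b n) + fsum F (\<lambda>n. \<Sum>p\<le>n. a p * b (n - p))"
    by (simp only: fsum_add[OF null_F[OF aF] null_F[OF bF]])
  also have "\<dots> = fsum F (\<lambda>n. (a n + b n) + (\<Sum>p\<le>n. a p * b (n - p)))"
    by (rule fsum_add[symmetric]) (rule null_add[OF null_F[OF aF] null_F[OF bF]], rule null_F[OF cF])
  also have "\<dots> = exp_prod_m1 sc F x y"
    unfolding exp_prod_m1_def
  proof (rule arg_cong[where f="fsum F"], rule ext)
    fix n
    show "(a n + b n) + (\<Sum>p\<le>n. a p * b (n - p)) =
      (if n = 0 then 0 else (\<Sum>p\<le>n. sc (1 / (of_nat (fact p) * of_nat (fact (n - p)))) (mon p (n - p) x y)))"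
    proof (cases "n = 0")
      case True then show ?thesis by (simp add: a_def b_def Efps0)
    next
      case False
      then have n1: "n \<ge> 1" by simp
      define m where "m p = sc (1 / (of_nat (fact p) * of_nat (fact (n - p)))) (mon p (n - p) x y)" for p
      have mid: "m p = a p * b (n - p)" if "p \<in> {1..<n}" for p
      proof -
        have "p \<noteq> 0" "n - p \<noteq> 0" using that by auto
        then have "m p = sc ((1 / of_nat (fact p)) * (1 / of_nat (fact (n - p)))) (npow p x * npow (n - p) y)"
          unfolding m_def mon_def by simp
        also have "\<dots> = a p * b (n - p)"
          unfolding a_def b_def using \<open>p \<noteq> 0\<close> \<open>n - p \<noteq> 0\<close> by (simp add: Efps_nth sc_prod)
        finally show ?thesis .
      qed
      have "(\<Sum>p\<le>n. m p) = m 0 + m n + (\<Sum>p\<in>{1..<n}. m p)" by (rule sum_split_ends[OF n1])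
      also have "m 0 = b n" unfolding m_def b_def mon_def using False by (simp add: Efps_nth)
      also have "m n = a n" unfolding m_def a_def mon_def using False by (simp add: Efps_nth)
      also have "(\<Sum>p\<in>{1..<n}. m p) = (\<Sum>p\<in>{1..<n}. a p * b (n - p))" by (rule sum.cong[OF refl mid])
      finally have l: "(\<Sum>p\<le>n. m p) = b n + a n + (\<Sum>p\<in>{1..<n}. a p * b (n - p))" .
      have "(\<Sum>p\<le>n. a p * b (n - p)) = a 0 * b n + a n * b 0 + (\<Sum>p\<in>{1..<n}. a p * b (n - p))"
        using sum_split_ends[OF n1, of "\<lambda>p. a p * b (n - p)"] by simp
      also have "a 0 = 0" unfolding a_def by (simp add: Efps0)
      also have "b 0 = 0" unfolding b_def by (simp add: Efps0)
      finally have r: "(\<Sum>p\<le>n. a p * b (n - p)) = (\<Sum>p\<in>{1..<n}. a p * b (n - p))" by simp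
      show ?thesis using False l r unfolding m_def by (simp add: add.commute)
    qed
  qed
  finally show ?thesis by (rule sym)
qed

lemma ev_P: assumes hP: "addhom P" and Ps: "\<And>a x. P (sc a x) = sc a (P x)"
  and Pm: "\<And>x y. P (x * y) = P x * P y" and x: "x \<in> F 1"
  shows "P (ev x f) = ev (P x) f"
proof -
  have P0: "P 0 = 0" by (rule addhom_0[OF hP])
  have "P (ev x f) = fsum F (\<lambda>n. P (sc (fps_nth f n) (npow n x)))"
    unfolding ev_def by (rule fsum_hom[OF hP ev_null[OF x], symmetric])
  also have "\<dots> = ev (P x) f"
    unfolding ev_def by (simp only: Ps npow_hom[of P, OF Pm P0])
  finally show ?thesis .
qed

end

context cfa
begin

lemma main:
  fixes P :: "'a \<Rightarrow> 'a" and chi :: "'a \<Rightarrow> 'a"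
  assumes P_add: "\<forall>x y. P (x + y) = P x + P y"
    and P_scale: "\<forall>a x. P (sc a x) = sc a (P x)"
    and P_filt: "\<forall>n. \<forall>x\<in>F n. P x \<in> F n"
    and P_mult: "\<forall>x y. P (x * y) = P x * P y"
    and P_idem: "\<forall>x. P (P x) = P x"
    and chi_maps: "\<forall>a\<in>F 1. chi a \<in> F 1"
    and chi_rec: "\<forall>a\<in>F 1. chi a = a - BCH sc F (P (chi a)) (chi a - P (chi a))"
  shows "\<forall>u\<in>F 1. chi u = u + BCH sc F (- P u) u"
proof
  fix u assume u: "u \<in> F 1"
  have hP: "addhom P" unfolding addhom_def using P_add P_filt by blast
  have Ps: "\<And>a x. P (sc a x) = sc a (P x)" using P_scale by blast
  have Pm: "\<And>x y. P (x * y) = P x * P y" using P_mult by blast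
  define E where "E z = ev z Efps" for z
  define L where "L z = ev z Lfps" for z
  define c where "c = chi u"
  define p where "p = P c"
  define q where "q = c - p"
  have c: "c \<in> F 1" unfolding c_def using chi_maps u by blast
  have p: "p \<in> F 1" unfolding p_def using P_filt c by blast
  have q: "q \<in> F 1" unfolding q_def using F_diff[OF c p] .
  have Pp: "P p = p" unfolding p_def using P_idem by blast
  have Pq: "P q = 0" unfolding q_def by (simp add: addhom_diff[OF hP] Pp flip: p_def)
  define M where "M = exp_prod_m1 sc F p q"
  have M: "M = E p + E q + E p * E q" unfolding M_def E_def by (rule exp_prod[OF p q])
  have MF: "M \<in> F 1" unfolding M using E_F1[OF p] E_F1[OF q] unfolding E_def
    by (intro F_add F_mult_left) 
  have rec: "c = u - (L M - p - q)"
    using chi_rec u unfolding c_def p_def q_def M_def L_def BCH_def log1p_ev by blast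
  have cpq: "c = p + q" unfolding q_def by simp
  have uL: "u = L M" using rec cpq by (simp add: algebra_simps)
  have Eu: "E u = M" unfolding uL E_def L_def by (rule EL[OF MF])
  have "E (P u) = P (E u)" unfolding E_def by (rule ev_P[OF hP Ps Pm u, symmetric])
  also have "\<dots> = P (E p) + P (E q) + P (E p) * P (E q)"
    unfolding Eu M by (simp only: P_add Pm)
  also have "\<dots> = E p"
    unfolding E_def by (simp add: ev_P[OF hP Ps Pm p] ev_P[OF hP Ps Pm q] Pp Pq ev_zero_base)
  finally have EPu: "E (P u) = E p" .
  have PuF: "P u \<in> F 1" using P_filt u by blast
  have "P u = ev (ev (P u) Efps) Lfps" by (rule LE[OF PuF, symmetric])
  also have "ev (P u) Efps = ev p Efps" using EPu unfolding E_def .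
  also have "ev (ev p Efps) Lfps = p" by (rule LE[OF p])
  finally have Pu: "P u = p" .
  define w where "w = P u"
  have w: "w \<in> F 1" unfolding w_def by (rule PuF)
  have nw: "- w \<in> F 1" by (rule F_neg[OF w])
  have M': "exp_prod_m1 sc F (- w) u = E (- w) + E u + E (- w) * E u"
    unfolding E_def by (rule exp_prod[OF nw u])
  have id: "E (- w) + E w + E (- w) * E w = 0" unfolding E_def by (rule Eid[OF w])
  have "E (- w) + E u + E (- w) * E u
      = (E (- w) + E w + E (- w) * E w) + E q + (E (- w) + E w + E (- w) * E w) * E q"
    unfolding Eu M Pu[folded w_def, symmetric] by (simp add: algebra_simps)
  also have "\<dots> = E q" by (simp only: id) simp
  finally have M'q: "exp_prod_m1 sc F (- w) u = E q" using M' by simp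
  have "BCH sc F (- P u) u = L (E q) + w - u"
    unfolding BCH_def log1p_ev L_def w_def[symmetric] M'q[unfolded E_def] E_def by simp
  also have "L (E q) = q" unfolding L_def E_def by (rule LE[OF q])
  finally have "BCH sc F (- P u) u = q + w - u" .
  then have "u + BCH sc F (- P u) u = q + p" using Pu unfolding w_def by simp
  then show "chi u = u + BCH sc F (- P u) u" unfolding c_def[symmetric] using cpq by (simp add: add.commute)
qed

end

theorem lemma2p7:
  fixes sc :: "'k::field_char_0 \<Rightarrow> 'a::ring \<Rightarrow> 'a"
    and F :: "nat \<Rightarrow> 'a set"
    and P :: "'a \<Rightarrow> 'a"
    and chi :: "'a \<Rightarrow> 'a"
  assumes A: "complete_filtered_algebra sc F"
    and P_add: "\<forall>x y. P (x + y) = P x + P y"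
    and P_scale: "\<forall>a x. P (sc a x) = sc a (P x)"
    and P_filt: "\<forall>n. \<forall>x\<in>F n. P x \<in> F n"
    and P_mult: "\<forall>x y. P (x * y) = P x * P y"
    and P_idem: "\<forall>x. P (P x) = P x"
    and chi_maps: "\<forall>a\<in>F 1. chi a \<in> F 1"
    and chi_rec: "\<forall>a\<in>F 1. chi a = a - BCH sc F (P (chi a)) (chi a - P (chi a))"
  shows "\<forall>u\<in>F 1. chi u = u + BCH sc F (- P u) u"
proof -
  interpret cfa sc F by unfold_locales (rule A)
  show ?thesis by (rule main[OF P_add P_scale P_filt P_mult P_idem chi_maps chi_rec])
qed

end
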